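(* Let $\tilde{H}\in\mathbb{C}^{K\times L}$, let $\tau_1,\dots,\tau_L\ge0$ be the eigenvalues of $\tilde{H}^\dagger\tilde{H}$, let $N\ge1$, and let $G\in\mathbb{C}^{N\times N}$ be a Hermitian positive definite matrix. Let $W=(\tilde{H}^\dagger\tilde{H})\otimes I_N$ and let $W=V_W\Lambda_W V_W^\dagger$ be an eigendecomposition with $V_W$ unitary and $\Lambda_W$ diagonal whose $j$-th diagonal entry is $\tau_{\lceil j/N\rceil}$, $j=1,\dots,NL$. Let $\sigma_0^2>0$, $\mu>0$, and $\bar{\alpha}_j=\sigma_0^2\big(\frac1\mu-\frac{1}{\tau_{\lceil j/N\rceil}}\big)^+$ for $j=1,\dots,NL$, and put $\bar{K}=V_W\,\mathrm{diag}(\bar{\alpha}_1,\dots,\bar{\alpha}_{NL})\,V_W^\dagger$. Then the matrix $\bar{\Sigma}_A=(I_L\otimes G)^{-1}\bar{K}$ is Hermitian and positive semidefinite (hence a valid covariance matrix).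
   Context: Notation: $\dagger$ is conjugate transpose, $\otimes$ the Kronecker product, $I_n$ the $n\times n$ identity, $(a)^+=\max(a,0)$ with the convention $(\frac1\mu-\frac10)^+=0$, $\lceil\cdot\rceil$ the ceiling. In the paper's application, $G$ is the Toeplitz matrix $(G)_{n,m}=g((n-m)\delta T)$ of samples of a raised cosine pulse and $\mu$ is fixed by a power constraint, but the conclusion is stated for the matrices as given. *)

theory Defs
  imports Complex_Main "Jordan_Normal_Form.Char_Poly" "Jordan_Normal_Form.Gauss_Jordan_Elimination"
begin

definition adj :: "complex mat \<Rightarrow> complex mat" where
  "adj M = mat (dim_col M) (dim_row M) (\<lambda>(i,j). cnj (M $$ (j,i)))"

definition kron :: "complex mat \<Rightarrow> complex mat \<Rightarrow> complex mat" where
  "kron A B = mat (dim_row A * dim_row B) (dim_col A * dim_col B)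
     (\<lambda>(i,j). A $$ (i div dim_row B, j div dim_col B) * B $$ (i mod dim_row B, j mod dim_col B))"

definition hermitian_mat :: "complex mat \<Rightarrow> bool" where
  "hermitian_mat M \<longleftrightarrow> dim_row M = dim_col M \<and> adj M = M"

definition unitary_mat :: "nat \<Rightarrow> complex mat \<Rightarrow> bool" where
  "unitary_mat n U \<longleftrightarrow> U \<in> carrier_mat n n \<and> adj U * U = 1\<^sub>m n \<and> U * adj U = 1\<^sub>m n"

definition qform :: "complex mat \<Rightarrow> complex vec \<Rightarrow> complex" where
  "qform M v = (\<Sum>i<dim_vec v. cnj (vec_index v i) * vec_index (M *\<^sub>v v) i)"

definition pos_semidef :: "complex mat \<Rightarrow> bool" where
  "pos_semidef M \<longleftrightarrow> hermitian_mat M \<and>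
     (\<forall>v \<in> carrier_vec (dim_row M). Re (qform M v) \<ge> 0)"

definition pos_def :: "complex mat \<Rightarrow> bool" where
  "pos_def M \<longleftrightarrow> hermitian_mat M \<and>
     (\<forall>v \<in> carrier_vec (dim_row M). v \<noteq> 0\<^sub>v (dim_row M) \<longrightarrow> Re (qform M v) > 0)"

text \<open>(1/mu - 1/t)^+ with the convention (1/mu - 1/0)^+ = 0.\<close>
definition wf_pos :: "real \<Rightarrow> real \<Rightarrow> real" where
  "wf_pos \<mu> t = (if t = 0 then 0 else max (1/\<mu> - 1/t) 0)"

end

theory Submission
  imports Defs
begin


lemma sum_split: fixes m q :: nat shows "(\<Sum>k<m*q. f k) = ((\<Sum>a<m. \<Sum>b<q. f (a*q+b)) :: 'a::comm_monoid_add)"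
proof (induction m)
  case 0 then show ?case by simp
next
  case (Suc m)
  have "(\<Sum>k<Suc m*q. f k) = (\<Sum>k<m*q. f k) + (\<Sum>k\<in>{m*q..<m*q+q}. f k)"
    by (simp add: add.commute lessThan_atLeast0 sum.atLeastLessThan_concat)
  also have "(\<Sum>k\<in>{m*q..<m*q+q}. f k) = (\<Sum>b<q. f (m*q+b))"
    using sum.shift_bounds_nat_ivl[of f 0 "m*q" q] by (simp add: lessThan_atLeast0 add.commute)
  finally show ?case using Suc by simp
qed

lemma dim_kron[simp]: "dim_row (kron A B) = dim_row A * dim_row B" "dim_col (kron A B) = dim_col A * dim_col B"
  by (auto simp: kron_def)

lemma kron_index[simp]: "i < dim_row A * dim_row B \<Longrightarrow> j < dim_col A * dim_col B \<Longrightarrow>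
  kron A B $$ (i,j) = A $$ (i div dim_row B, j div dim_col B) * B $$ (i mod dim_row B, j mod dim_col B)"
  by (auto simp: kron_def)

lemma kron_carrier[simp]: "A \<in> carrier_mat m n \<Longrightarrow> B \<in> carrier_mat p q \<Longrightarrow> kron A B \<in> carrier_mat (m*p) (n*q)"
  by (auto simp: kron_def)

lemma kron_mult:
  assumes A: "A \<in> carrier_mat m n" and B: "B \<in> carrier_mat p q"
    and C: "C \<in> carrier_mat n r" and D: "D \<in> carrier_mat q s"
  shows "kron A B * kron C D = kron (A*C) (B*D)"
proof (rule eq_matI)
  fix i j assume i: "i < dim_row (kron (A*C) (B*D))" and j: "j < dim_col (kron (A*C) (B*D))"
  from i A B have i': "i < m*p" by simp
  from j C D have j': "j < r*s" by simp
  have ip: "i div p < m" "i mod p < p" using i' 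
    by (auto simp: less_mult_imp_div_less) (metis mod_less_divisor mult_0_right not_gr_zero not_less_zero)
  have js: "j div s < r" "j mod s < s" using j'
    by (auto simp: less_mult_imp_div_less) (metis mod_less_divisor mult_0_right not_gr_zero not_less_zero)
  have "(kron A B * kron C D) $$ (i,j) = (\<Sum>k<n*q. A $$ (i div p, k div q) * B $$ (i mod p, k mod q) *
         (C $$ (k div q, j div s) * D $$ (k mod q, j mod s)))"
    using A B C D i' j' by (simp add: scalar_prod_def lessThan_atLeast0 [symmetric] sum.reindex) 
  also have "\<dots> = (\<Sum>a<n. \<Sum>b<q. A $$ (i div p, a) * B $$ (i mod p, b) *
         (C $$ (a, j div s) * D $$ (b, j mod s)))"
    by (subst sum_split) (auto intro!: sum.cong)
  also have "\<dots> = (\<Sum>a<n. A $$ (i div p, a) * C $$ (a, j div s)) * (\<Sum>b<q. B $$ (i mod p, b) * D $$ (b, j mod s))"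
    by (simp add: sum_product algebra_simps)
  also have "\<dots> = kron (A*C) (B*D) $$ (i,j)"
    using A B C D i' j' ip js by (simp add: scalar_prod_def lessThan_atLeast0)
  finally show "(kron A B * kron C D) $$ (i,j) = kron (A*C) (B*D) $$ (i,j)" .
qed (use A B C D in auto)


lemma adj_carrier[simp]: "dim_row (adj A) = dim_col A" "dim_col (adj A) = dim_row A"
  by (auto simp: adj_def)
lemma adj_carrier_mat[simp]: "A \<in> carrier_mat m n \<Longrightarrow> adj A \<in> carrier_mat n m"
  by (auto simp: adj_def)
lemma adj_index[simp]: "i < dim_col A \<Longrightarrow> j < dim_row A \<Longrightarrow> adj A $$ (i,j) = cnj (A $$ (j,i))"
  by (auto simp: adj_def)
lemma adj_adj[simp]: "adj (adj A) = A"
  by (rule eq_matI) (auto simp: adj_def)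
lemma adj_mult: assumes "A \<in> carrier_mat m n" "B \<in> carrier_mat n r"
  shows "adj (A * B) = adj B * adj A"
  by (rule eq_matI) (use assms in \<open>auto simp: adj_def scalar_prod_def cnj_sum intro!: sum.cong\<close>)
lemma adj_one[simp]: "adj (1\<^sub>m n) = 1\<^sub>m n"
  by (rule eq_matI) (auto simp: adj_def)
lemma adj_diag_real: "adj (mat_diag n (\<lambda>j. complex_of_real (f j))) = mat_diag n (\<lambda>j. complex_of_real (f j))"
  by (rule eq_matI) (auto simp: adj_def mat_diag_def)

definition ip :: "complex vec \<Rightarrow> complex vec \<Rightarrow> complex" where
  "ip u w = (\<Sum>i<dim_vec u. cnj (u $ i) * w $ i)"

lemma qform_ip: "qform M v = ip v (M *\<^sub>v v)"
  by (simp add: qform_def ip_def)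

lemma ip_cnj: "dim_vec u = dim_vec w \<Longrightarrow> ip w u = cnj (ip u w)"
  by (simp add: ip_def cnj_sum mult.commute)

lemma ip_adj: assumes A: "A \<in> carrier_mat n m" and v: "v \<in> carrier_vec m" and w: "w \<in> carrier_vec n"
  shows "ip v (adj A *\<^sub>v w) = ip (A *\<^sub>v v) w"
proof -
  have "ip v (adj A *\<^sub>v w) = (\<Sum>i<m. cnj (v $ i) * (\<Sum>k<n. cnj (A $$ (k,i)) * w $ k))"
    using A v w by (simp add: ip_def scalar_prod_def lessThan_atLeast0)
  also have "\<dots> = (\<Sum>k<n. \<Sum>i<m. cnj (v $ i) * cnj (A $$ (k,i)) * w $ k)"
    by (simp add: sum_distrib_left mult.assoc) (rule sum.swap)
  also have "\<dots> = (\<Sum>k<n. cnj (\<Sum>i<m. A $$ (k,i) * v $ i) * w $ k)"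
    by (simp add: cnj_sum sum_distrib_left sum_distrib_right ac_simps)
  also have "\<dots> = ip (A *\<^sub>v v) w"
    using A v w by (simp add: ip_def scalar_prod_def lessThan_atLeast0)
  finally show ?thesis .
qed

lemma kron_one_one: assumes "N > 0" shows "kron (1\<^sub>m L) (1\<^sub>m N) = 1\<^sub>m (L*N)"
proof (rule eq_matI)
  fix i j assume "i < dim_row (1\<^sub>m (L*N))" "j < dim_col (1\<^sub>m (L*N))"
  then have ij: "i < L*N" "j < L*N" by auto
  then have "i div N < L" "j div N < L" by (auto simp: less_mult_imp_div_less)
  moreover have "i mod N < N" "j mod N < N" using assms by auto
  moreover have "(i div N = j div N \<and> i mod N = j mod N) = (i = j)"
    by (metis div_mult_mod_eq)
  ultimately show "kron (1\<^sub>m L) (1\<^sub>m N) $$ (i,j) = 1\<^sub>m (L*N) $$ (i,j)" using ij by auto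
qed auto

lemma kron_hermitian: assumes "hermitian_mat G" "G \<in> carrier_mat N N"
  shows "adj (kron (1\<^sub>m L) G) = kron (1\<^sub>m L) G"
proof (rule eq_matI)
  fix i j assume "i < dim_row (kron (1\<^sub>m L) G)" "j < dim_col (kron (1\<^sub>m L) G)"
  then have ij: "i < L*N" "j < L*N" using assms by auto
  then have "i div N < L" "j div N < L" by (auto simp: less_mult_imp_div_less)
  moreover have "i mod N < N" "j mod N < N" using ij
    by (metis mod_less_divisor mult_0_right not_gr_zero not_less_zero)+
  moreover have "cnj (G $$ (j mod N, i mod N)) = G $$ (i mod N, j mod N)"
    using assms(1) calculation by (metis adj_index assms(2) carrier_matD hermitian_mat_def)
  ultimately show "adj (kron (1\<^sub>m L) G) $$ (i,j) = kron (1\<^sub>m L) G $$ (i,j)" using ij assms(2) by auto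
qed (use assms in auto)

lemma idx_lt: fixes a r L N :: nat assumes "a < L" "r < N" shows "a*N+r < L*N"
proof -
  have "a*N+r < (a+1)*N" using assms by simp
  also have "(a+1)*N \<le> L*N" using assms by (intro mult_le_mono1) simp
  finally show ?thesis .
qed

lemma kron_qform: assumes G: "G \<in> carrier_mat N N" and v: "v \<in> carrier_vec (L*N)"
  shows "qform (kron (1\<^sub>m L) G) v = (\<Sum>a<L. qform G (vec N (\<lambda>s. v $ (a*N+s))))"
proof -
  have inner: "(kron (1\<^sub>m L) G *\<^sub>v v) $ (a*N+r) = (\<Sum>s<N. G $$ (r,s) * v $ (a*N+s))"
    if a: "a < L" and r: "r < N" for a r
  proof -
    have i: "a*N+r < L*N" proof -
      have "a*N+r < (a+1)*N" using r by simp
      also have "(a+1)*N \<le> L*N" using a by (intro mult_le_mono1) simp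
      finally show ?thesis .
    qed
    have "(kron (1\<^sub>m L) G *\<^sub>v v) $ (a*N+r) = (\<Sum>k<L*N. kron (1\<^sub>m L) G $$ (a*N+r, k) * v $ k)"
      using G v i by (simp add: scalar_prod_def lessThan_atLeast0 mult_mat_vec_def)
    also have "\<dots> = (\<Sum>b<L. \<Sum>s<N. kron (1\<^sub>m L) G $$ (a*N+r, b*N+s) * v $ (b*N+s))"
      by (rule sum_split)
    also have "\<dots> = (\<Sum>b<L. \<Sum>s<N. (if b = a then G $$ (r,s) * v $ (b*N+s) else 0))"
      by (intro sum.cong refl) (use G a r in \<open>auto simp: idx_lt\<close>)
    also have "\<dots> = (\<Sum>b<L. if b = a then (\<Sum>s<N. G $$ (r,s) * v $ (b*N+s)) else 0)"
      by (intro sum.cong refl) auto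
    also have "\<dots> = (\<Sum>s<N. G $$ (r,s) * v $ (a*N+s))"
      using a by (simp add: sum.delta')
    finally show ?thesis .
  qed
  have "qform (kron (1\<^sub>m L) G) v = (\<Sum>i<L*N. cnj (v $ i) * (kron (1\<^sub>m L) G *\<^sub>v v) $ i)"
    using v by (simp add: qform_def)
  also have "\<dots> = (\<Sum>a<L. \<Sum>r<N. cnj (v $ (a*N+r)) * (kron (1\<^sub>m L) G *\<^sub>v v) $ (a*N+r))"
    by (rule sum_split)
  also have "\<dots> = (\<Sum>a<L. qform G (vec N (\<lambda>s. v $ (a*N+s))))"
    using G by (auto simp: qform_def inner scalar_prod_def lessThan_atLeast0 intro!: sum.cong)
  finally show ?thesis .
qed



lemma pos_def_nonneg: assumes "pos_def G" "v \<in> carrier_vec (dim_row G)"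
  shows "Re (qform G v) \<ge> 0"
proof (cases "v = 0\<^sub>v (dim_row G)")
  case True then show ?thesis by (simp add: qform_def)
next
  case False then show ?thesis using assms unfolding pos_def_def by (meson less_le)
qed


theorem lemma5:
  fixes H G V :: "complex mat" and K L N :: nat and \<tau> :: "nat \<Rightarrow> real"
    and \<sigma>0 \<mu> :: real
  assumes H: "H \<in> carrier_mat K L"
    and tau_nonneg: "\<forall>i<L. \<tau> i \<ge> 0"
    and tau_eig: "char_poly (adj H * H) = (\<Prod>i<L. [:- complex_of_real (\<tau> i), 1:])"
    and N: "N \<ge> 1"
    and G: "G \<in> carrier_mat N N" "pos_def G"
    and V: "unitary_mat (N * L) V"
    and W: "kron (adj H * H) (1\<^sub>m N)
              = V * mat_diag (N * L) (\<lambda>j. complex_of_real (\<tau> (j div N))) * adj V"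
    and sigma: "\<sigma>0\<^sup>2 > 0"
    and mu: "\<mu> > 0"
  shows "pos_semidef (the (mat_inverse (kron (1\<^sub>m L) G)) *
           (V * mat_diag (N * L) (\<lambda>j. complex_of_real (\<sigma>0\<^sup>2 * wf_pos \<mu> (\<tau> (j div N)))) * adj V))"
proof -
  define n where "n = N * L"
  have LN: "L * N = n" by (simp add: n_def)
  note as = assoc_mult_mat[of _ n n _ n _ n]
  have mc[simp]: "A * B \<in> carrier_mat n n" if "A \<in> carrier_mat n n" "B \<in> carrier_mat n n" for A B :: "complex mat"
    using that by (metis mult_carrier_mat)
  from V have Vc: "V \<in> carrier_mat n n" and VV: "adj V * V = 1\<^sub>m n" "V * adj V = 1\<^sub>m n"
    by (auto simp: unitary_mat_def n_def)
  have aVc: "adj V \<in> carrier_mat n n" using Vc by simp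
  have VVX: "adj V * (V * X) = X" if "X \<in> carrier_mat n n" for X
  proof -
    have "adj V * (V * X) = (adj V * V) * X" using as[OF aVc Vc that] by simp
    then show ?thesis using VV that by simp
  qed
  have "det G \<noteq> 0"
  proof
    assume "det G = 0"
    then obtain v where v: "v \<in> carrier_vec N" "v \<noteq> 0\<^sub>v N" "G *\<^sub>v v = 0\<^sub>v N"
      using det_0_iff_vec_prod_zero[OF G(1)] by blast
    have "qform G v = 0" using v by (simp add: qform_def)
    with G v show False unfolding pos_def_def by auto
  qed
  then have "G \<in> Units (ring_mat TYPE(complex) N ())" by (rule det_non_zero_imp_unit[OF G(1)])
  then obtain Gi where "mat_inverse G = Some Gi" using mat_inverse(1)[OF G(1)] by fastforce
  from mat_inverse(2)[OF G(1) this] have Gi: "G * Gi = 1\<^sub>m N" "Gi * G = 1\<^sub>m N" "Gi \<in> carrier_mat N N" by auto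
  define G' where "G' = kron (1\<^sub>m L) G"
  have G'c: "G' \<in> carrier_mat n n" using G(1) LN unfolding G'_def by (metis kron_carrier one_carrier_mat)
  have N0: "N > 0" using N by simp
  have "G' * kron (1\<^sub>m L) Gi = 1\<^sub>m n" "kron (1\<^sub>m L) Gi * G' = 1\<^sub>m n"
    unfolding G'_def using G(1) Gi LN kron_one_one[OF N0, of L]
    by (simp_all add: kron_mult[of _ L L _ N N _ L _ N])
  moreover have "kron (1\<^sub>m L) Gi \<in> carrier_mat n n" using Gi LN by (metis kron_carrier one_carrier_mat)
  ultimately have "G' \<in> Units (ring_mat TYPE(complex) n ())"
    using G'c unfolding Units_def by (auto simp: ring_mat_def)
  then obtain P where Pdef: "mat_inverse G' = Some P" using mat_inverse(1)[OF G'c] by fastforce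
  from mat_inverse(2)[OF G'c this] have P: "G' * P = 1\<^sub>m n" "P * G' = 1\<^sub>m n" "P \<in> carrier_mat n n" by auto
  have Pthe: "the (mat_inverse (kron (1\<^sub>m L) G)) = P" using Pdef by (simp add: G'_def)
  have hG: "hermitian_mat G" using G(2) by (simp add: pos_def_def)
  have aG': "adj G' = G'" unfolding G'_def by (rule kron_hermitian[OF hG G(1)])
  have aP: "adj P = P"
  proof -
    have "adj P * G' = 1\<^sub>m n" using adj_mult[OF G'c P(3)] P(1) aG' by simp
    then have "adj P = adj P * (G' * P)" using P by simp
    also have "\<dots> = (adj P * G') * P" using P G'c by (simp add: as)
    finally show ?thesis using \<open>adj P * G' = 1\<^sub>m n\<close> P by simp
  qed
  have Ppsd: "Re (qform P w) \<ge> 0" if w: "w \<in> carrier_vec n" for w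
  proof -
    define u where "u = P *\<^sub>v w"
    have u: "u \<in> carrier_vec n" using P w by (simp add: u_def)
    have wu: "G' *\<^sub>v u = w" using P w G'c by (simp add: u_def flip: assoc_mult_mat_vec)
    have "qform P w = ip (G' *\<^sub>v u) u" unfolding wu by (simp add: qform_ip u_def)
    also have "\<dots> = cnj (ip u (G' *\<^sub>v u))" by (rule ip_cnj) (use G'c u in simp)
    finally have "Re (qform P w) = Re (qform G' u)" by (simp add: qform_ip)
    also have "qform G' u = (\<Sum>a<L. qform G (vec N (\<lambda>s. u $ (a*N+s))))"
      unfolding G'_def by (rule kron_qform[OF G(1)]) (use u LN in simp)
    finally have "Re (qform P w) = (\<Sum>a<L. Re (qform G (vec N (\<lambda>s. u $ (a*N+s)))))" by simp
    also have "\<dots> \<ge> 0" using G by (intro sum_nonneg pos_def_nonneg) auto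
    finally show ?thesis .
  qed
  define lam where "lam = (\<lambda>j. complex_of_real (\<tau> (j div N)))"
  define dd where "dd = (\<lambda>j. sqrt (\<sigma>0\<^sup>2 * wf_pos \<mu> (\<tau> (j div N))))"
  define Lam where "Lam = mat_diag n lam"
  define D where "D = mat_diag n (\<lambda>j. complex_of_real (dd j))"
  define Kd where "Kd = mat_diag n (\<lambda>j. complex_of_real (\<sigma>0\<^sup>2 * wf_pos \<mu> (\<tau> (j div N))))"
  have Lc: "Lam \<in> carrier_mat n n" and Dc: "D \<in> carrier_mat n n" by (simp_all add: Lam_def D_def)
  have wf_nn: "wf_pos \<mu> t \<ge> 0" for t by (simp add: wf_pos_def)
  have DD: "D * D = Kd" unfolding D_def Kd_def dd_def mat_diag_diag
    by (intro arg_cong[where f="mat_diag n"] ext) (metis of_real_mult real_sqrt_mult_self sigma wf_nn less_imp_le mult_nonneg_nonneg real_sqrt_mult real_sqrt_abs abs_of_nonneg)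
  define W' where "W' = kron (adj H * H) (1\<^sub>m N)"
  have AHc: "adj H * H \<in> carrier_mat L L" using H by (intro mult_carrier_mat[of _ L K]) auto
  have W'c: "W' \<in> carrier_mat n n" unfolding W'_def using AHc LN by (metis kron_carrier one_carrier_mat)
  have WV: "W' = V * Lam * adj V" using W by (simp add: W'_def Lam_def lam_def n_def)
  have GW: "G' * W' = W' * G'"
    unfolding G'_def W'_def using G(1) AHc
    by (simp add: kron_mult[of _ L L _ N N _ L _ N] left_mult_one_mat[of _ L L] right_mult_one_mat[of _ L L])
  have PW: "P * W' = W' * P"
  proof -
    have "P * W' = P * (W' * (G' * P))" using P W'c by simp
    also have "\<dots> = P * ((G' * W') * P)" using GW P W'c G'c by (simp add: as)
    also have "\<dots> = (P * G') * (W' * P)" using P(3) W'c G'c by (metis as mult_carrier_mat)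
    finally show ?thesis using P W'c by simp
  qed
  define B where "B = adj V * P * V"
  have Bc: "B \<in> carrier_mat n n" using P Vc aVc by (simp add: B_def)
  have WVV: "W' * V = V * Lam" using WV VV Vc Lc by (simp add: as)
  have VW: "adj V * W' = Lam * adj V" using WV VV Vc Lc by (simp add: as flip: as)
  have BL: "B * Lam = Lam * B"
  proof -
    have "B * Lam = adj V * (P * (V * Lam))" using P Vc Lc by (simp add: B_def as)
    also have "\<dots> = adj V * (P * W') * V" using P Vc Lc W'c by (simp add: WVV as)
    also have "\<dots> = (adj V * W') * P * V" using P Vc Lc W'c by (simp add: PW as)
    also have "\<dots> = Lam * B" using P Vc Lc W'c by (simp add: VW as B_def)
    finally show ?thesis .
  qed
  have BD: "B * D = D * B"
  proof (rule eq_matI)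
    fix i j assume ij: "i < dim_row (D * B)" "j < dim_col (D * B)"
    then have ij': "i < n" "j < n" using Dc Bc by auto
    have e: "B $$ (i,j) * lam j = lam i * B $$ (i,j)"
      using arg_cong[OF BL, of "\<lambda>M. M $$ (i,j)"] Bc ij'
      by (simp add: Lam_def mat_diag_mult_left[of _ n n] mat_diag_mult_right[of _ n n])
    have "B $$ (i,j) * dd j = dd i * B $$ (i,j)"
    proof (cases "B $$ (i,j) = 0")
      case False
      with e have "lam i = lam j" by simp
      then have "\<tau> (i div N) = \<tau> (j div N)" by (simp add: lam_def)
      then show ?thesis by (simp add: dd_def)
    qed simp
    then show "(B * D) $$ (i,j) = (D * B) $$ (i,j)"
      using Bc ij' by (simp add: D_def mat_diag_mult_left[of _ n n] mat_diag_mult_right[of _ n n])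
  qed (use Bc Dc in auto)
  have PB: "P = V * B * adj V"
  proof -
    have "V * B * adj V = (V * adj V) * P * (V * adj V)" using P Vc aVc by (simp add: B_def as)
    then show ?thesis using VV P by simp
  qed
  define S where "S = V * D * adj V"
  have Sc: "S \<in> carrier_mat n n" using Vc Dc by (simp add: S_def)
  have aS: "adj S = S" unfolding S_def D_def using Vc Dc
    by (simp add: adj_mult[of _ n n _ n] adj_diag_real as)
  have PS: "P * S = S * P"
  proof -
    have "P * S = V * (B * (adj V * V) * D) * adj V" using Vc Bc Dc by (simp add: PB S_def as)
    also have "\<dots> = V * (D * (adj V * V) * B) * adj V" using Vc Bc Dc by (simp add: VV BD)
    also have "\<dots> = S * P" using Vc Bc Dc by (simp add: PB S_def as)
    finally show ?thesis .
  qed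
  have KS: "V * Kd * adj V = S * S" using Vc Dc aVc by (simp add: S_def as VVX flip: DD)
  define M where "M = S * P * S"
  have Mc: "M \<in> carrier_mat n n" using Sc P by (simp add: M_def)
  have MM: "P * (V * Kd * adj V) = M"
  proof -
    have "P * (V * Kd * adj V) = (P * S) * S" unfolding KS using as[OF P(3) Sc Sc] by simp
    also have "\<dots> = M" unfolding PS M_def ..
    finally show ?thesis .
  qed
  have aM: "adj M = M" unfolding M_def using Sc P aS aP by (simp add: adj_mult[of _ n n _ n] as)
  have Mpsd: "Re (qform M v) \<ge> 0" if v: "v \<in> carrier_vec n" for v
  proof -
    have "qform M v = ip v (adj S *\<^sub>v (P *\<^sub>v (S *\<^sub>v v)))" using Sc P v aS by (simp add: M_def qform_ip assoc_mult_mat_vec[of _ n n _ n])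
    also have "\<dots> = ip (S *\<^sub>v v) (P *\<^sub>v (S *\<^sub>v v))" using Sc P v by (intro ip_adj) auto
    finally have "qform M v = qform P (S *\<^sub>v v)" by (simp add: qform_ip)
    then show ?thesis using Ppsd Sc v by simp
  qed
  have "pos_semidef M" unfolding pos_semidef_def hermitian_mat_def using Mc aM Mpsd by auto
  then show ?thesis using MM Pthe by (simp add: Kd_def n_def)
qed
end
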